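(* Let $f(x,y)=x^2y$. If $\{x^2y : x,y\in\widetilde C\} = [\tfrac{8}{27},1]$, then $\{x^2y : x,y\in C\} = [0,1]$.
   Context: $C=\{\sum_{k\ge1}\alpha_k3^{-k}:\alpha_k\in\{0,2\}\}$ is the middle-thirds Cantor set, and $\widetilde C = C\cap[\tfrac23,1]$. *)

theory Defs
  imports "HOL-Analysis.Analysis"
begin

text \<open>Middle-thirds Cantor set: numbers sum_{k>=1} a_k 3^{-k} with a_k in {0,2}.
  Digits are indexed from 0: a k corresponds to alpha_{k+1}.\<close>
definition cantor_set :: "real set" where
  "cantor_set = {x. \<exists>a::nat \<Rightarrow> real. (\<forall>k. a k \<in> {0, 2}) \<and>
                      x = (\<Sum>k. a k / 3 ^ (Suc k))}"

definition cantor_tilde :: "real set" where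
  "cantor_tilde = cantor_set \<inter> {2/3..1}"

end

theory Submission
  imports Defs
begin

lemma geom3: "(\<lambda>k::nat. 2 / 3 ^ Suc k) sums (1::real)"
proof -
  have "(\<lambda>k::nat. (1/3::real) ^ k) sums (1 / (1 - 1/3))"
    by (rule geometric_sums) simp
  hence "(\<lambda>k::nat. (2/3) * (1/3::real) ^ k) sums ((2/3) * (1 / (1 - 1/3)))"
    by (rule sums_mult)
  thus ?thesis by (simp add: power_divide field_simps)
qed

lemma cantor_summable:
  assumes "\<forall>k. a k \<in> {0, 2::real}"
  shows "summable (\<lambda>k. a k / 3 ^ Suc k)"
proof (rule summable_comparison_test[OF _ sums_summable[OF geom3]])
  show "\<exists>N. \<forall>n\<ge>N. norm (a n / 3 ^ Suc n) \<le> 2 / 3 ^ Suc n"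
  proof (intro exI[of _ 0] allI impI)
    fix n :: nat
    have "\<bar>a n\<bar> \<le> 2" using assms by (metis abs_0 abs_numeral insert_iff order_refl singletonD zero_le_numeral)
    thus "norm (a n / 3 ^ Suc n) \<le> 2 / 3 ^ Suc n" by (simp add: divide_right_mono)
  qed
qed

lemma cantor_bounds:
  assumes "x \<in> cantor_set" shows "0 \<le> x \<and> x \<le> 1"
proof -
  obtain a where a: "\<forall>k. a k \<in> {0, 2::real}" and x: "x = (\<Sum>k. a k / 3 ^ Suc k)"
    using assms unfolding cantor_set_def by blast
  have s: "summable (\<lambda>k. a k / 3 ^ Suc k)" using cantor_summable[OF a] .
  have a0: "0 \<le> a k" for k using a by (metis insert_iff order_refl singletonD zero_le_numeral)
  have a2: "a k \<le> 2" for k using a by (metis insert_iff order_refl singletonD zero_le_numeral)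
  have "0 \<le> x" unfolding x using a0 by (intro suminf_nonneg[OF s]) auto
  moreover have "x \<le> (\<Sum>k. 2 / 3 ^ Suc k)" unfolding x
    using a2 by (intro suminf_le[OF _ s sums_summable[OF geom3]]) (auto intro: divide_right_mono)
  ultimately show ?thesis using sums_unique[OF geom3] by simp
qed

lemma cantor_zero: "(0::real) \<in> cantor_set"
  unfolding cantor_set_def by (rule CollectI, rule exI[of _ "\<lambda>_. 0"]) simp

lemma cantor_div3:
  assumes "y \<in> cantor_set" shows "y / 3 \<in> cantor_set"
proof -
  obtain a where a: "\<forall>k. a k \<in> {0, 2::real}" and y: "y = (\<Sum>k. a k / 3 ^ Suc k)"
    using assms unfolding cantor_set_def by blast
  define b where "b = case_nat 0 a"
  have b: "\<forall>k. b k \<in> {0, 2::real}" using a by (auto simp: b_def split: nat.split)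
  have "(\<lambda>k. a k / 3 ^ Suc k) sums y" using cantor_summable[OF a] y by (simp add: summable_sums)
  hence "(\<lambda>k. a k / 3 ^ Suc k / 3) sums (y / 3)" by (rule sums_divide)
  hence "(\<lambda>k. b (Suc k) / 3 ^ Suc (Suc k)) sums (y / 3)" by (simp add: b_def mult.commute)
  hence "(\<lambda>k. b k / 3 ^ Suc k) sums (y / 3 + b 0 / 3 ^ Suc 0)"
    by (subst sums_Suc_iff[symmetric])
  hence "(\<lambda>k. b k / 3 ^ Suc k) sums (y / 3)" by (simp add: b_def)
  hence "y / 3 = (\<Sum>k. b k / 3 ^ Suc k)" by (metis sums_unique)
  thus ?thesis unfolding cantor_set_def using b by blast
qed

theorem lemma3p3:
  assumes "{x^2 * y | x y. x \<in> cantor_tilde \<and> y \<in> cantor_tilde} = {8/27..(1::real)}"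
  shows "{x^2 * y | x y. x \<in> cantor_set \<and> y \<in> cantor_set} = {0..(1::real)}"
proof
  show "{x^2 * y | x y. x \<in> cantor_set \<and> y \<in> cantor_set} \<subseteq> {0..1}"
  proof
    fix t assume "t \<in> {x^2 * y | x y. x \<in> cantor_set \<and> y \<in> cantor_set}"
    then obtain x y where t: "t = x^2 * y" and xy: "x \<in> cantor_set" "y \<in> cantor_set" by blast
    have "0 \<le> x" "x \<le> 1" "0 \<le> y" "y \<le> 1" using cantor_bounds xy by auto
    moreover have "x^2 \<le> 1" using calculation by (simp add: power_le_one)
    ultimately show "t \<in> {0..1}" unfolding t by (auto intro: mult_le_one)
  qed
next
  define S where "S = {x^2 * y | x y. x \<in> cantor_set \<and> y \<in> cantor_set}"
  have base: "{8/27..1} \<subseteq> S" unfolding S_def assms[symmetric] cantor_tilde_def by blast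
  have div3: "t / 3 \<in> S" if "t \<in> S" for t
  proof -
    from that obtain x y where t: "t = x^2 * y" and xy: "x \<in> cantor_set" "y \<in> cantor_set"
      unfolding S_def by auto
    have "t / 3 = x^2 * (y/3)" using t by simp
    thus ?thesis unfolding S_def using xy cantor_div3 by blast
  qed
  have ind: "\<And>t. 1 / 3 ^ n < t \<Longrightarrow> t \<le> 1 \<Longrightarrow> t \<in> S" for n :: nat
  proof (induction n)
    case 0 thus ?case by simp
  next
    case (Suc n)
    show ?case
    proof (cases "t \<ge> 1/3")
      case True thus ?thesis using base Suc.prems by auto
    next
      case False
      have "1 / 3 ^ n < 3 * t" using Suc.prems(1) by (simp add: field_simps)
      hence "3 * t \<in> S" using Suc.IH False by simp
      from div3[OF this] show ?thesis by simp
    qed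
  qed
  show "{0..1} \<subseteq> S"
  proof
    fix t :: real assume t: "t \<in> {0..1}"
    show "t \<in> S"
    proof (cases "t = 0")
      case True
      thus ?thesis unfolding S_def using cantor_zero by force
    next
      case False
      hence "0 < t" using t by simp
      then obtain n where "(1/3::real) ^ n < t" using real_arch_pow_inv[of t "1/3"] by auto
      thus ?thesis using ind t by (simp add: power_divide)
    qed
  qed
qed

end
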